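(* Let $n \ge m \ge 2$ and let $K_{n,m}$ be the complete bipartite graph with bipartition $(X,Y)$, $|X|=n$, $|Y|=m$. If $U$ is a strong edge geodetic set of $K_{n,m}$, then $X \subseteq U$ or $Y \subseteq U$.
   Context: All graphs are finite, simple and connected. A set $S \subseteq V(G)$ is a strong edge geodetic set of $G$ if one can assign to every unordered pair $\{u,v\}$ of distinct vertices of $S$ either one shortest $u,v$-path $P_{uv}$ in $G$ or no path, in such a way that every edge of $G$ lies on at least one of the assigned paths. *)

theory Defs
  imports Main
begin

text \<open>A graph is given by a vertex set V and an adjacency relation E
 (assumed symmetric and irreflexive where relevant).
 A walk is a nonempty list of vertices with consecutive vertices adjacent;
 its length is the number of edges, i.e. length minus one.\<close>

definition is_walk :: "'a set \<Rightarrow> ('a \<Rightarrow> 'a \<Rightarrow> bool) \<Rightarrow> 'a \<Rightarrow> 'a \<Rightarrow> 'a list \<Rightarrow> bool" where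
  "is_walk V E u v p \<longleftrightarrow> p \<noteq> [] \<and> hd p = u \<and> last p = v \<and> set p \<subseteq> V \<and>
     (\<forall>i. Suc i < length p \<longrightarrow> E (p ! i) (p ! Suc i))"

definition gdist :: "'a set \<Rightarrow> ('a \<Rightarrow> 'a \<Rightarrow> bool) \<Rightarrow> 'a \<Rightarrow> 'a \<Rightarrow> nat" where
  "gdist V E u v = (LEAST k. \<exists>p. is_walk V E u v p \<and> length p = Suc k)"

definition is_shortest_path :: "'a set \<Rightarrow> ('a \<Rightarrow> 'a \<Rightarrow> bool) \<Rightarrow> 'a \<Rightarrow> 'a \<Rightarrow> 'a list \<Rightarrow> bool" where
  "is_shortest_path V E u v p \<longleftrightarrow> is_walk V E u v p \<and> distinct p \<and>
     length p = Suc (gdist V E u v)"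

definition edge_on :: "'a \<Rightarrow> 'a \<Rightarrow> 'a list \<Rightarrow> bool" where
  "edge_on x y p \<longleftrightarrow> (\<exists>i. Suc i < length p \<and> {p ! i, p ! Suc i} = {x, y})"

text \<open>Strong edge geodetic set: an assignment P of at most one shortest path to
 every unordered pair {u,v} of distinct vertices of S (an undirected path, so
 it may be listed from u to v or from v to u) such that every edge lies on some
 assigned path.\<close>
definition strong_edge_geodetic :: "'a set \<Rightarrow> ('a \<Rightarrow> 'a \<Rightarrow> bool) \<Rightarrow> 'a set \<Rightarrow> bool" where
  "strong_edge_geodetic V E S \<longleftrightarrow> S \<subseteq> V \<and>
    (\<exists>P :: 'a set \<Rightarrow> 'a list option.
       (\<forall>u\<in>S. \<forall>v\<in>S. \<forall>p. u \<noteq> v \<longrightarrow> P {u, v} = Some p \<longrightarrow>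
            is_shortest_path V E u v p \<or> is_shortest_path V E v u p) \<and>
       (\<forall>x\<in>V. \<forall>y\<in>V. E x y \<longrightarrow>
            (\<exists>u\<in>S. \<exists>v\<in>S. \<exists>p. u \<noteq> v \<and> P {u, v} = Some p \<and> edge_on x y p)))"

definition kbip :: "'a set \<Rightarrow> 'a set \<Rightarrow> 'a \<Rightarrow> 'a \<Rightarrow> bool" where
  "kbip X Y x y \<longleftrightarrow> (x \<in> X \<and> y \<in> Y) \<or> (x \<in> Y \<and> y \<in> X)"

end

theory Submission
  imports Defs
begin

lemma gdist_le:
  assumes "is_walk V E u v p" "length p = Suc k"
  shows "gdist V E u v \<le> k"
  unfolding gdist_def using assms by (intro Least_le) blast

lemma dist_le2:
  assumes "x0 \<in> X" "y0 \<in> Y" "u \<in> X \<union> Y" "v \<in> X \<union> Y"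
  shows "gdist (X \<union> Y) (kbip X Y) u v \<le> 2"
proof -
  consider "u \<in> X" "v \<in> X" | "u \<in> X" "v \<in> Y" | "u \<in> Y" "v \<in> X" | "u \<in> Y" "v \<in> Y"
    using assms by blast
  then show ?thesis
  proof cases
    case 1
    have "is_walk (X \<union> Y) (kbip X Y) u v [u, y0, v]"
      using 1 assms unfolding is_walk_def kbip_def
      by (auto simp: less_Suc_eq nth_Cons split: nat.splits)
    from gdist_le[OF this] show ?thesis by simp
  next
    case 2
    have "is_walk (X \<union> Y) (kbip X Y) u v [u, v]"
      using 2 assms unfolding is_walk_def kbip_def
      by (auto simp: less_Suc_eq nth_Cons split: nat.splits)
    from gdist_le[OF this] show ?thesis by simp
  next
    case 3
    have "is_walk (X \<union> Y) (kbip X Y) u v [u, v]"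
      using 3 assms unfolding is_walk_def kbip_def
      by (auto simp: less_Suc_eq nth_Cons split: nat.splits)
    from gdist_le[OF this] show ?thesis by simp
  next
    case 4
    have "is_walk (X \<union> Y) (kbip X Y) u v [u, x0, v]"
      using 4 assms unfolding is_walk_def kbip_def
      by (auto simp: less_Suc_eq nth_Cons split: nat.splits)
    from gdist_le[OF this] show ?thesis by simp
  qed
qed

lemma path_short:
  assumes "is_walk V E a b p" "length p \<le> 3" "a \<in> U" "b \<in> U"
    "x \<notin> U" "y \<notin> U" "Suc i < length p" "{p ! i, p ! Suc i} = {x, y}"
  shows False
proof -
  have ne: "p \<noteq> []" and h: "hd p = a" and l: "last p = b" using assms(1) unfolding is_walk_def by auto
  have "p ! 0 = a" using ne h by (simp add: hd_conv_nth)
  moreover have "p ! (length p - 1) = b" using ne l by (simp add: last_conv_nth)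
  moreover have "p ! i \<notin> U" "p ! Suc i \<notin> U" using assms(5,6,8) by (auto simp: doubleton_eq_iff)
  ultimately have "i \<noteq> 0" "Suc i \<noteq> length p - 1" using assms(3,4) by (metis)+
  then show False using assms(2,7) by linarith
qed

theorem mainTheorem2:
  fixes X Y U :: "'a set" and n m :: nat
  assumes "2 \<le> m" and "m \<le> n"
    and "finite X" and "finite Y" and "card X = n" and "card Y = m"
    and "X \<inter> Y = {}"
    and "strong_edge_geodetic (X \<union> Y) (kbip X Y) U"
  shows "X \<subseteq> U \<or> Y \<subseteq> U"
proof (rule ccontr)
  assume "\<not> ?thesis"
  then obtain x y where x: "x \<in> X" "x \<notin> U" and y: "y \<in> Y" "y \<notin> U" by blast
  from assms(8) obtain P where SV: "U \<subseteq> X \<union> Y" and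
    P1: "\<forall>u\<in>U. \<forall>v\<in>U. \<forall>p. u \<noteq> v \<longrightarrow> P {u, v} = Some p \<longrightarrow>
            is_shortest_path (X \<union> Y) (kbip X Y) u v p \<or> is_shortest_path (X \<union> Y) (kbip X Y) v u p"
    and P2: "\<forall>a\<in>X \<union> Y. \<forall>b\<in>X \<union> Y. kbip X Y a b \<longrightarrow>
            (\<exists>u\<in>U. \<exists>v\<in>U. \<exists>p. u \<noteq> v \<and> P {u, v} = Some p \<and> edge_on a b p)"
    unfolding strong_edge_geodetic_def by blast
  have "kbip X Y x y" using x y unfolding kbip_def by auto
  then obtain u v p where uv: "u \<in> U" "v \<in> U" "u \<noteq> v" "P {u, v} = Some p" "edge_on x y p"
    using P2 x y by blast
  then obtain i where i: "Suc i < length p" "{p ! i, p ! Suc i} = {x, y}"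
    unfolding edge_on_def by blast
  have "is_shortest_path (X \<union> Y) (kbip X Y) u v p \<or> is_shortest_path (X \<union> Y) (kbip X Y) v u p"
    using P1 uv by blast
  then show False
  proof
    assume sp: "is_shortest_path (X \<union> Y) (kbip X Y) u v p"
    have "gdist (X \<union> Y) (kbip X Y) u v \<le> 2" using dist_le2[OF x(1) y(1)] SV uv by blast
    with sp have "length p \<le> 3" unfolding is_shortest_path_def by simp
    then show False using path_short[of _ _ u v p U x y i] sp uv x y i
      unfolding is_shortest_path_def by blast
  next
    assume sp: "is_shortest_path (X \<union> Y) (kbip X Y) v u p"
    have "gdist (X \<union> Y) (kbip X Y) v u \<le> 2" using dist_le2[OF x(1) y(1)] SV uv by blast
    with sp have "length p \<le> 3" unfolding is_shortest_path_def by simp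
    then show False using path_short[of _ _ v u p U x y i] sp uv x y i
      unfolding is_shortest_path_def by blast
  qed
qed

end
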